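(* Fix integers $d\ge1$, $k\ge2$ and $1\le t\le k-1$. Let $E$ be a set of $l$ unordered pairs $\{i,j\}$ of distinct indices in $\{1,\dots,k\}$ (so $l\le\binom{k}{2}$) such that every index $i$ lies in at most $t$ pairs of $E$. For every $\varepsilon>0$ there is a constant $C=C(\varepsilon,d,k)>0$ such that the following holds. Let $q$ be a prime power, $B$ a non-degenerate bilinear form on $\mathbb{F}_q^d$, and $\mathcal{A}_1,\dots,\mathcal{A}_k\subseteq\mathbb{F}_q^d$ with $|\mathcal{A}_i|\ge C\,q^{\frac{d-1}{2}+t}$ for all $i$. Then for any choice of $\lambda_{ij}\in\mathbb{F}_q^*$, $\{i,j\}\in E$, the number $S$ of tuples $(\mathbf{a}_1,\dots,\mathbf{a}_k)\in\mathcal{A}_1\times\cdots\times\mathcal{A}_k$ satisfying the system \[ B(\mathbf{a}_i,\mathbf{a}_j)=\lambda_{ij}\quad\text{for all }\{i,j\}\in E \] satisfies $\big|S-q^{-l}\prod_{i=1}^k|\mathcal{A}_i|\big|\le \varepsilon\, q^{-l}\prod_{i=1}^k|\mathcal{A}_i|$. (In asymptotic notation: if $|\mathcal{A}_i|\gg q^{\frac{d-1}{2}+t}$ then the system has $(1+o(1))q^{-l}\prod_i|\mathcal{A}_i|$ solutions.)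
   Context: $B:\mathbb{F}_q^d\times\mathbb{F}_q^d\to\mathbb{F}_q$ is bilinear and non-degenerate; for each pair $\{i,j\}\in E$ the equation is written with the index order $(i,j)$ fixed once and for all. $\mathbb{F}_q^*=\mathbb{F}_q\setminus\{0\}$. *)

theory Defs
  imports Complex_Main "HOL-Algebra.Ring"
begin

definition fvecs :: "('a, 'b) ring_scheme \<Rightarrow> nat \<Rightarrow> 'a list set" where
  "fvecs R d = {v. length v = d \<and> set v \<subseteq> carrier R}"

definition vadd :: "('a, 'b) ring_scheme \<Rightarrow> 'a list \<Rightarrow> 'a list \<Rightarrow> 'a list" where
  "vadd R x y = map2 (\<lambda>a b. a \<oplus>\<^bsub>R\<^esub> b) x y"

definition vsmult :: "('a, 'b) ring_scheme \<Rightarrow> 'a \<Rightarrow> 'a list \<Rightarrow> 'a list" where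
  "vsmult R c x = map (\<lambda>a. c \<otimes>\<^bsub>R\<^esub> a) x"

definition vzero :: "('a, 'b) ring_scheme \<Rightarrow> nat \<Rightarrow> 'a list" where
  "vzero R d = replicate d \<zero>\<^bsub>R\<^esub>"

definition bilinear_form :: "('a, 'b) ring_scheme \<Rightarrow> nat \<Rightarrow> ('a list \<Rightarrow> 'a list \<Rightarrow> 'a) \<Rightarrow> bool" where
  "bilinear_form R d B \<longleftrightarrow>
     (\<forall>x\<in>fvecs R d. \<forall>y\<in>fvecs R d. B x y \<in> carrier R) \<and>
     (\<forall>x\<in>fvecs R d. \<forall>y\<in>fvecs R d. \<forall>z\<in>fvecs R d.
        B (vadd R x y) z = B x z \<oplus>\<^bsub>R\<^esub> B y z \<and>
        B z (vadd R x y) = B z x \<oplus>\<^bsub>R\<^esub> B z y) \<and>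
     (\<forall>c\<in>carrier R. \<forall>x\<in>fvecs R d. \<forall>y\<in>fvecs R d.
        B (vsmult R c x) y = c \<otimes>\<^bsub>R\<^esub> B x y \<and>
        B x (vsmult R c y) = c \<otimes>\<^bsub>R\<^esub> B x y)"

text \<open>Non-degenerate: trivial left and right kernels (equivalent in finite dimension).\<close>
definition nondegenerate :: "('a, 'b) ring_scheme \<Rightarrow> nat \<Rightarrow> ('a list \<Rightarrow> 'a list \<Rightarrow> 'a) \<Rightarrow> bool" where
  "nondegenerate R d B \<longleftrightarrow>
     (\<forall>x\<in>fvecs R d. (\<forall>y\<in>fvecs R d. B x y = \<zero>\<^bsub>R\<^esub>) \<longrightarrow> x = vzero R d) \<and>
     (\<forall>y\<in>fvecs R d. (\<forall>x\<in>fvecs R d. B x y = \<zero>\<^bsub>R\<^esub>) \<longrightarrow> y = vzero R d)"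

text \<open>A system pattern E on indices {0..<k}: a set of ordered pairs (i,j) (orientation
  fixed once and for all), i \<noteq> j, each unordered pair occurring at most once.\<close>
definition edge_set :: "nat \<Rightarrow> (nat \<times> nat) set \<Rightarrow> bool" where
  "edge_set k E \<longleftrightarrow> (\<forall>(i,j)\<in>E. i < k \<and> j < k \<and> i \<noteq> j \<and> (j,i) \<notin> E)"

definition degree_in :: "(nat \<times> nat) set \<Rightarrow> nat \<Rightarrow> nat" where
  "degree_in E i = card {e\<in>E. fst e = i \<or> snd e = i}"

definition num_solutions ::
  "('a, 'b) ring_scheme \<Rightarrow> ('a list \<Rightarrow> 'a list \<Rightarrow> 'a) \<Rightarrow> nat \<Rightarrow> (nat \<times> nat) set
     \<Rightarrow> (nat \<Rightarrow> 'a list set) \<Rightarrow> (nat \<times> nat \<Rightarrow> 'a) \<Rightarrow> nat" where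
  "num_solutions R B k E A lam =
     card {as. length as = k \<and> (\<forall>i<k. as ! i \<in> A i) \<and>
               (\<forall>(i,j)\<in>E. B (as ! i) (as ! j) = lam (i,j))}"

end

theory Submission
  imports Defs "HOL-Analysis.Convex"
begin

lemma fvecs_iff: "v \<in> fvecs R d \<longleftrightarrow> length v = d \<and> (\<forall>i<d. v!i \<in> carrier R)"
  unfolding fvecs_def by (auto simp: subset_iff in_set_conv_nth)

lemma card_fibers:
  assumes "finite A" "f ` A \<subseteq> T" "finite T"
  shows "card A = (\<Sum>t\<in>T. card {x\<in>A. f x = t})"
proof -
  have "A = (\<Union>t\<in>T. {x\<in>A. f x = t})" using assms(2) by blast
  hence "card A = card (\<Union>t\<in>T. {x\<in>A. f x = t})" by simp
  also have "\<dots> = (\<Sum>t\<in>T. card {x\<in>A. f x = t})"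
    by (rule card_UN_disjoint) (use assms in auto)
  finally show ?thesis .
qed

locale bfq = field R for R (structure) +
  fixes d :: nat and B
  assumes finR: "finite (carrier R)"
    and bil: "bilinear_form R d B"
    and nd: "nondegenerate R d B"
begin

abbreviation "V \<equiv> fvecs R d"

lemma vadd_closed: "x \<in> V \<Longrightarrow> y \<in> V \<Longrightarrow> vadd R x y \<in> V"
  by (auto simp: fvecs_iff vadd_def)
lemma vsmult_closed: "c \<in> carrier R \<Longrightarrow> x \<in> V \<Longrightarrow> vsmult R c x \<in> V"
  by (auto simp: fvecs_iff vsmult_def)
lemma vzero_closed: "vzero R d \<in> V" by (auto simp: fvecs_iff vzero_def)

lemma finV: "finite V"
  unfolding fvecs_def using finite_lists_length_eq[OF finR, of d] by (simp add: conj_commute)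
lemma cardV: "card V = card (carrier R) ^ d"
  unfolding fvecs_def using card_lists_length_eq[OF finR, of d] by (simp add: conj_commute)

lemma B_closed: "x \<in> V \<Longrightarrow> y \<in> V \<Longrightarrow> B x y \<in> carrier R"
  using bil unfolding bilinear_form_def by blast
lemma B_add_l: "x \<in> V \<Longrightarrow> y \<in> V \<Longrightarrow> z \<in> V \<Longrightarrow> B (vadd R x y) z = B x z \<oplus> B y z"
  using bil unfolding bilinear_form_def by blast
lemma B_add_r: "x \<in> V \<Longrightarrow> y \<in> V \<Longrightarrow> z \<in> V \<Longrightarrow> B z (vadd R x y) = B z x \<oplus> B z y"
  using bil unfolding bilinear_form_def by blast
lemma B_smult_l: "c \<in> carrier R \<Longrightarrow> x \<in> V \<Longrightarrow> y \<in> V \<Longrightarrow> B (vsmult R c x) y = c \<otimes> B x y"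
  using bil unfolding bilinear_form_def by blast
lemma B_smult_r: "c \<in> carrier R \<Longrightarrow> x \<in> V \<Longrightarrow> y \<in> V \<Longrightarrow> B x (vsmult R c y) = c \<otimes> B x y"
  using bil unfolding bilinear_form_def by blast

lemma vsmult_zero: "vsmult R \<zero> (vzero R d) = vzero R d"
  by (simp add: vsmult_def vzero_def)

lemma B_zero_r: "x \<in> V \<Longrightarrow> B x (vzero R d) = \<zero>"
  using B_smult_r[of \<zero> x "vzero R d"] vzero_closed B_closed[of x "vzero R d"]
  by (simp add: vsmult_zero)

lemma nd_r: "y \<in> V \<Longrightarrow> y \<noteq> vzero R d \<Longrightarrow> \<exists>x\<in>V. B x y \<noteq> \<zero>"
  using nd unfolding nondegenerate_def by blast

lemma exists_one: assumes "y \<in> V" "y \<noteq> vzero R d" shows "\<exists>x0\<in>V. B x0 y = \<one>"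
proof -
  obtain x where x: "x \<in> V" "B x y \<noteq> \<zero>" using nd_r assms by blast
  have b: "B x y \<in> carrier R" using B_closed x assms by blast
  hence u: "B x y \<in> Units R" using x field_Units by blast
  show ?thesis
    apply (rule bexI[of _ "vsmult R (inv (B x y)) x"])
    using B_smult_l[of "inv (B x y)" x y] u x assms by (auto intro: vsmult_closed)
qed

lemma vadd_inj: assumes "x \<in> V" "x' \<in> V" "w \<in> V" "vadd R x w = vadd R x' w" shows "x = x'"
proof (rule nth_equalityI)
  show "length x = length x'" using assms by (simp add: fvecs_iff)
  fix i assume "i < length x"
  hence "i < d" using assms by (simp add: fvecs_iff)
  have e1: "(vadd R x w)!i = x!i \<oplus> w!i" using assms(1-3) \<open>i<d\<close> by (simp add: vadd_def fvecs_iff)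
  have e2: "(vadd R x' w)!i = x'!i \<oplus> w!i" using assms(1-3) \<open>i<d\<close> by (simp add: vadd_def fvecs_iff)
  have "x!i \<oplus> w!i = x'!i \<oplus> w!i" using e1 e2 assms(4) by simp
  thus "x!i = x'!i" using assms \<open>i<d\<close> by (meson add.right_cancel fvecs_iff)
qed


lemma fiber_le:
  assumes y: "y \<in> V" "y \<noteq> vzero R d" and l: "l \<in> carrier R" "m \<in> carrier R"
  shows "card {x\<in>V. B x y = l} \<le> card {x\<in>V. B x y = m}"
proof -
  obtain x0 where x0: "x0 \<in> V" "B x0 y = \<one>" using exists_one y by blast
  define w where "w = vsmult R (m \<ominus> l) x0"
  have w: "w \<in> V" unfolding w_def using x0 l by (intro vsmult_closed) auto
  show ?thesis
  proof (rule card_inj_on_le[of "\<lambda>x. vadd R x w"])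
    show "inj_on (\<lambda>x. vadd R x w) {x \<in> V. B x y = l}"
      using vadd_inj w by (auto simp: inj_on_def)
    show "(\<lambda>x. vadd R x w) ` {x \<in> V. B x y = l} \<subseteq> {x \<in> V. B x y = m}"
    proof
      fix z assume "z \<in> (\<lambda>x. vadd R x w) ` {x \<in> V. B x y = l}"
      then obtain x where x: "x \<in> V" "B x y = l" and z: "z = vadd R x w" by blast
      have "vadd R x w \<in> V" using x w vadd_closed by blast
      have "B (vadd R x w) y = l \<oplus> (m \<ominus> l) \<otimes> \<one>"
        using B_add_l[OF x(1) w y(1)] B_smult_l[of "m \<ominus> l" x0 y] x x0 l y unfolding w_def by simp
      also have "\<dots> = m" using l by algebra
      finally show "z \<in> {x \<in> V. B x y = m}" using z \<open>vadd R x w \<in> V\<close> by simp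
    qed
    show "finite {x \<in> V. B x y = m}" using finV by simp
  qed
qed

abbreviation "q \<equiv> card (carrier R)"

lemma fiber_card:
  assumes y: "y \<in> V" "y \<noteq> vzero R d" and l: "l \<in> carrier R"
  shows "q * card {x\<in>V. B x y = l} = q ^ d"
proof -
  have "q ^ d = card V" using cardV by simp
  also have "\<dots> = (\<Sum>m\<in>carrier R. card {x\<in>V. B x y = m})"
    by (rule card_fibers) (use finV finR B_closed y in auto)
  also have "\<dots> = (\<Sum>m\<in>carrier R. card {x\<in>V. B x y = l})"
    using fiber_le y l by (intro sum.cong refl antisym) auto
  also have "\<dots> = q * card {x\<in>V. B x y = l}" by simp
  finally show ?thesis by simp
qed

lemma vsub_zero:
  assumes "y \<in> V" "y' \<in> V" "c \<in> carrier R" "vadd R y' (vsmult R (\<ominus> c) y) = vzero R d"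
  shows "y' = vsmult R c y"
proof (rule nth_equalityI)
  show "length y' = length (vsmult R c y)" using assms by (simp add: fvecs_iff vsmult_def)
  fix i assume "i < length y'"
  hence i: "i < d" using assms by (simp add: fvecs_iff)
  have "(vadd R y' (vsmult R (\<ominus> c) y))!i = y'!i \<oplus> (\<ominus> c \<otimes> y!i)"
    using assms(1-3) i by (simp add: vadd_def vsmult_def fvecs_iff)
  hence e: "y'!i \<oplus> (\<ominus> c \<otimes> y!i) = \<zero>" using assms(4) i by (simp add: vzero_def)
  have yi: "y!i \<in> carrier R" "y'!i \<in> carrier R" using assms i by (auto simp: fvecs_iff)
  have "y'!i = y'!i \<oplus> (\<ominus> c \<otimes> y!i) \<oplus> c \<otimes> y!i" using yi assms(3) by algebra
  also have "\<dots> = c \<otimes> y!i" using e yi assms(3) by simp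
  finally show "y'!i = (vsmult R c y)!i" using i assms by (simp add: vsmult_def fvecs_iff)
qed

lemma exists_x2:
  assumes y: "y \<in> V" "y' \<in> V" "y \<noteq> vzero R d" and ind: "\<forall>c\<in>carrier R. y' \<noteq> vsmult R c y"
  shows "\<exists>x2\<in>V. B x2 y = \<zero> \<and> B x2 y' = \<one>"
proof -
  obtain x0 where x0: "x0 \<in> V" "B x0 y = \<one>" using exists_one y by blast
  define c where "c = B x0 y'"
  have c: "c \<in> carrier R" unfolding c_def using B_closed x0 y by blast
  have "\<exists>x\<in>V. B x y = \<zero> \<and> B x y' \<noteq> \<zero>"
  proof (rule ccontr)
    assume "\<not> ?thesis"
    hence H: "\<And>x. x \<in> V \<Longrightarrow> B x y = \<zero> \<Longrightarrow> B x y' = \<zero>" by blast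
    define w where "w = vadd R y' (vsmult R (\<ominus> c) y)"
    have w: "w \<in> V" unfolding w_def using y c by (intro vadd_closed vsmult_closed) auto
    have "\<forall>x\<in>V. B x w = \<zero>"
    proof
      fix x assume x: "x \<in> V"
      define b where "b = B x y"
      have b: "b \<in> carrier R" unfolding b_def using B_closed x y by blast
      have b': "B x y' \<in> carrier R" using B_closed x y by blast
      define z where "z = vadd R x (vsmult R (\<ominus> b) x0)"
      have z: "z \<in> V" unfolding z_def using x x0 b by (intro vadd_closed vsmult_closed) auto
      have "B z y = b \<oplus> \<ominus> b \<otimes> \<one>"
        unfolding z_def using B_add_l[of x "vsmult R (\<ominus> b) x0" y] B_smult_l[of "\<ominus> b" x0 y] x x0 y b
        by (simp add: vsmult_closed b_def)
      also have "\<dots> = \<zero>" using b by algebra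
      finally have "B z y' = \<zero>" using H z by blast
      moreover have "B z y' = B x y' \<oplus> \<ominus> b \<otimes> c"
        unfolding z_def using B_add_l[of x "vsmult R (\<ominus> b) x0" y'] B_smult_l[of "\<ominus> b" x0 y'] x x0 y b
        by (simp add: vsmult_closed c_def)
      moreover have "B x w = B x y' \<oplus> \<ominus> c \<otimes> b"
        unfolding w_def using B_add_r[of y' "vsmult R (\<ominus> c) y" x] B_smult_r[of "\<ominus> c" x y] x y c
        by (simp add: vsmult_closed b_def)
      moreover have "\<ominus> c \<otimes> b = \<ominus> b \<otimes> c" using b c by algebra
      ultimately show "B x w = \<zero>" by simp
    qed
    hence "w = vzero R d" using nd w unfolding nondegenerate_def by blast
    hence "y' = vsmult R c y" using vsub_zero y c unfolding w_def by blast
    thus False using ind c by blast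
  qed
  then obtain x where x: "x \<in> V" "B x y = \<zero>" "B x y' \<noteq> \<zero>" by blast
  have e: "B x y' \<in> Units R" using x B_closed y field_Units by blast
  show ?thesis
    apply (rule bexI[of _ "vsmult R (inv (B x y')) x"])
    using B_smult_l[of "inv (B x y')" x y'] B_smult_l[of "inv (B x y')" x y] e x y
    by (auto intro: vsmult_closed)
qed

lemma exists_x1x2:
  assumes y: "y \<in> V" "y' \<in> V" "y \<noteq> vzero R d" and ind: "\<forall>c\<in>carrier R. y' \<noteq> vsmult R c y"
  shows "\<exists>x1\<in>V. \<exists>x2\<in>V. B x1 y = \<one> \<and> B x1 y' = \<zero> \<and> B x2 y = \<zero> \<and> B x2 y' = \<one>"
proof -
  obtain x0 where x0: "x0 \<in> V" "B x0 y = \<one>" using exists_one y by blast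
  obtain x2 where x2: "x2 \<in> V" "B x2 y = \<zero>" "B x2 y' = \<one>" using exists_x2[OF y ind] by blast
  define c where "c = B x0 y'"
  have c: "c \<in> carrier R" unfolding c_def using B_closed x0 y by blast
  define x1 where "x1 = vadd R x0 (vsmult R (\<ominus> c) x2)"
  have x1: "x1 \<in> V" unfolding x1_def using x0 x2 c by (intro vadd_closed vsmult_closed) auto
  have "B x1 y = \<one> \<oplus> \<ominus> c \<otimes> \<zero>"
    unfolding x1_def using B_add_l[of x0 "vsmult R (\<ominus> c) x2" y] B_smult_l[of "\<ominus> c" x2 y] x0 x2 y c
    by (simp add: vsmult_closed)
  also have "\<dots> = \<one>" using c by algebra
  finally have 1: "B x1 y = \<one>" .
  have "B x1 y' = c \<oplus> \<ominus> c \<otimes> \<one>"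
    unfolding x1_def using B_add_l[of x0 "vsmult R (\<ominus> c) x2" y'] B_smult_l[of "\<ominus> c" x2 y'] x0 x2 y c
    by (simp add: vsmult_closed c_def)
  also have "\<dots> = \<zero>" using c by algebra
  finally have 2: "B x1 y' = \<zero>" .
  show ?thesis using 1 2 x1 x2 by blast
qed

lemma fiber2_le:
  assumes y: "y \<in> V" "y' \<in> V" "y \<noteq> vzero R d" and ind: "\<forall>c\<in>carrier R. y' \<noteq> vsmult R c y"
    and l: "l \<in> carrier R" "l' \<in> carrier R" "a \<in> carrier R" "b \<in> carrier R"
  shows "card {x\<in>V. B x y = l \<and> B x y' = l'} \<le> card {x\<in>V. B x y = a \<and> B x y' = b}"
proof -
  obtain x1 x2 where xx: "x1 \<in> V" "x2 \<in> V" "B x1 y = \<one>" "B x1 y' = \<zero>" "B x2 y = \<zero>" "B x2 y' = \<one>"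
    using exists_x1x2[OF y ind] by blast
  define w where "w = vadd R (vsmult R (a \<ominus> l) x1) (vsmult R (b \<ominus> l') x2)"
  have w: "w \<in> V" unfolding w_def using xx l by (intro vadd_closed vsmult_closed) auto
  have Bw1: "B w y = (a \<ominus> l) \<otimes> \<one> \<oplus> (b \<ominus> l') \<otimes> \<zero>"
    unfolding w_def using B_add_l[of "vsmult R (a \<ominus> l) x1" "vsmult R (b \<ominus> l') x2" y]
      B_smult_l[of "a \<ominus> l" x1 y] B_smult_l[of "b \<ominus> l'" x2 y] xx l y
    by (simp add: vsmult_closed)
  have Bw2: "B w y' = (a \<ominus> l) \<otimes> \<zero> \<oplus> (b \<ominus> l') \<otimes> \<one>"
    unfolding w_def using B_add_l[of "vsmult R (a \<ominus> l) x1" "vsmult R (b \<ominus> l') x2" y']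
      B_smult_l[of "a \<ominus> l" x1 y'] B_smult_l[of "b \<ominus> l'" x2 y'] xx l y
    by (simp add: vsmult_closed)
  show ?thesis
  proof (rule card_inj_on_le[of "\<lambda>x. vadd R x w"])
    show "inj_on (\<lambda>x. vadd R x w) {x\<in>V. B x y = l \<and> B x y' = l'}"
      using vadd_inj w by (auto simp: inj_on_def)
    show "(\<lambda>x. vadd R x w) ` {x\<in>V. B x y = l \<and> B x y' = l'} \<subseteq> {x\<in>V. B x y = a \<and> B x y' = b}"
    proof
      fix z assume "z \<in> (\<lambda>x. vadd R x w) ` {x\<in>V. B x y = l \<and> B x y' = l'}"
      then obtain x where x: "x \<in> V" "B x y = l" "B x y' = l'" and z: "z = vadd R x w" by blast
      have zV: "vadd R x w \<in> V" using x w vadd_closed by blast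
      have "B (vadd R x w) y = l \<oplus> ((a \<ominus> l) \<otimes> \<one> \<oplus> (b \<ominus> l') \<otimes> \<zero>)"
        using B_add_l[OF x(1) w y(1)] x Bw1 by simp
      also have "\<dots> = a" using l by algebra
      finally have 1: "B (vadd R x w) y = a" .
      have "B (vadd R x w) y' = l' \<oplus> ((a \<ominus> l) \<otimes> \<zero> \<oplus> (b \<ominus> l') \<otimes> \<one>)"
        using B_add_l[OF x(1) w y(2)] x Bw2 by simp
      also have "\<dots> = b" using l by algebra
      finally have 2: "B (vadd R x w) y' = b" .
      show "z \<in> {x\<in>V. B x y = a \<and> B x y' = b}" using z zV 1 2 by simp
    qed
    show "finite {x\<in>V. B x y = a \<and> B x y' = b}" using finV by simp
  qed
qed

lemma fiber2_card:
  assumes y: "y \<in> V" "y' \<in> V" "y \<noteq> vzero R d" and ind: "\<forall>c\<in>carrier R. y' \<noteq> vsmult R c y"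
    and l: "l \<in> carrier R" "l' \<in> carrier R"
  shows "q ^ 2 * card {x\<in>V. B x y = l \<and> B x y' = l'} \<le> q ^ d"
proof -
  have "q ^ 2 * card {x\<in>V. B x y = l \<and> B x y' = l'} = (\<Sum>p\<in>carrier R \<times> carrier R. card {x\<in>V. B x y = l \<and> B x y' = l'})"
    by (simp add: card_cartesian_product power2_eq_square)
  also have "\<dots> \<le> (\<Sum>p\<in>carrier R \<times> carrier R. card {x\<in>V. (B x y, B x y') = p})"
    by (rule sum_mono) (use fiber2_le[OF y ind l] in auto)
  also have "\<dots> = card V"
    by (rule card_fibers[symmetric]) (use finV finR B_closed y in auto)
  finally show ?thesis using cardV by simp
qed

lemma vsmult_one: "y \<in> V \<Longrightarrow> vsmult R \<one> y = y"
  by (rule nth_equalityI) (auto simp: vsmult_def fvecs_iff)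

lemma q_ge2: "q \<ge> 2"
proof -
  have "{\<zero>, \<one>} \<subseteq> carrier R" by simp
  hence "card {\<zero>, \<one>} \<le> q" using finR card_mono by blast
  thus ?thesis by simp
qed

lemma single_card:
  assumes y: "y \<in> V" and l: "l \<in> carrier R" "l \<noteq> \<zero>"
  shows "real q * card {x\<in>V. B x y = l} = (if y = vzero R d then 0 else real q ^ d)"
proof (cases "y = vzero R d")
  case True
  hence e: "{x\<in>V. B x y = l} = {}" using B_zero_r l by auto
  show ?thesis unfolding e using True by simp
next
  case False
  have "real (q * card {x\<in>V. B x y = l}) = real (q ^ d)" using fiber_card[OF y False l(1)] by (rule arg_cong)
  then show ?thesis using False by simp
qed

lemma pair_card:
  assumes y: "y \<in> V" "y' \<in> V" "y \<noteq> y'" and l: "l \<in> carrier R" "l \<noteq> \<zero>"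
  shows "real q ^ 2 * card {x\<in>V. B x y = l \<and> B x y' = l} \<le> real q ^ d"
proof (cases "y = vzero R d \<or> (\<exists>c\<in>carrier R. y' = vsmult R c y)")
  case True
  have e: "{x\<in>V. B x y = l \<and> B x y' = l} = {}"
  proof (rule ccontr)
    assume "\<not> ?thesis"
    then obtain x where x: "x \<in> V" "B x y = l" "B x y' = l" by blast
    show False using True
    proof
      assume "y = vzero R d" thus False using x B_zero_r l by auto
    next
      assume "\<exists>c\<in>carrier R. y' = vsmult R c y"
      then obtain c where c: "c \<in> carrier R" "y' = vsmult R c y" by blast
      hence "l = c \<otimes> l" using x B_smult_r[of c x y] y by simp
      hence "\<one> \<otimes> l = c \<otimes> l" using l by simp
      hence "c = \<one>" using m_rcancel[of l \<one> c] l c by simp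
      thus False using c y vsmult_one by auto
    qed
  qed
  show ?thesis unfolding e by simp
next
  case False
  hence a: "y \<noteq> vzero R d" "\<forall>c\<in>carrier R. y' \<noteq> vsmult R c y" by auto
  have "q ^ 2 * card {x\<in>V. B x y = l \<and> B x y' = l} \<le> q ^ d"
    using fiber2_card[OF y(1,2) a l(1) l(1)] .
  hence "real (q ^ 2 * card {x\<in>V. B x y = l \<and> B x y' = l}) \<le> real (q ^ d)" by (simp only: of_nat_le_iff)
  thus ?thesis by simp
qed

lemma sum_ind: "finite A \<Longrightarrow> (\<Sum>x\<in>A. if P x then 1 else (0::real)) = real (card {x\<in>A. P x})"
  by (simp add: sum.If_cases Int_def conj_commute)

lemma arith_BE:
  fixes Q n S1 S2 D :: real
  assumes Q: "Q \<ge> 2" and n: "n \<ge> 0" and D: "D \<ge> 0"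
    and h2: "Q ^ 2 * S2 \<le> n * (Q * D) + n ^ 2 * D" and h1: "n * D - D \<le> Q * S1"
  shows "S2 - 2 * (n / Q) * S1 + D * (n / Q) ^ 2 \<le> 2 * (D / Q) * n"
proof -
  have Q0: "Q \<noteq> 0" "Q > 0" using Q by auto
  have m: "2 * n * (n * D - D) \<le> 2 * n * (Q * S1)" using mult_left_mono[OF h1, of "2 * n"] n by simp
  have "Q ^ 2 * (S2 - 2 * (n / Q) * S1 + D * (n / Q) ^ 2) = Q ^ 2 * S2 - 2 * n * (Q * S1) + D * n ^ 2"
    using Q0 by (simp add: field_simps power2_eq_square)
  also have "\<dots> \<le> (n * (Q * D) + n ^ 2 * D) - 2 * n * (n * D - D) + D * n ^ 2"
    using h2 m by linarith
  also have "\<dots> = n * Q * D + 2 * n * D" by (simp add: algebra_simps power2_eq_square)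
  also have "\<dots> \<le> Q ^ 2 * (2 * (D / Q) * n)"
  proof -
    have nd: "n * D \<ge> 0" using n D by simp
    have "2 * (n * D) \<le> Q * (n * D)" using mult_right_mono[OF Q nd] .
    moreover have "Q ^ 2 * (2 * (D / Q) * n) = 2 * Q * (n * D)" using Q0 by (simp add: field_simps power2_eq_square)
    ultimately show ?thesis by (simp add: algebra_simps)
  qed
  finally have "Q ^ 2 * (S2 - 2 * (n / Q) * S1 + D * (n / Q) ^ 2) \<le> Q ^ 2 * (2 * (D / Q) * n)" .
  moreover have "Q ^ 2 > 0" using Q0 by simp
  ultimately show ?thesis using mult_le_cancel_left_pos by blast
qed

lemma BE_V:
  assumes Y: "Y \<subseteq> V" and l: "l \<in> carrier R" "l \<noteq> \<zero>"
  shows "(\<Sum>x\<in>V. ((\<Sum>y\<in>Y. if B x y = l then 1 else 0) - real (card Y) / q)\<^sup>2)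
          \<le> 2 * (real q ^ d / q) * card Y"
proof -
  define Q where "Q = real q"
  have Q2: "Q \<ge> 2" unfolding Q_def using q_ge2 by simp
  define N where "N x = (\<Sum>y\<in>Y. if B x y = l then 1 else (0::real))" for x
  define a where "a = real (card Y) / Q"
  have finY: "finite Y" using Y finV finite_subset by blast
  have c1: "Q * (\<Sum>x\<in>V. (if B x y = l then 1 else (0::real))) \<ge> Q ^ d - (if y = vzero R d then Q ^ d else 0)"
    if "y \<in> Y" for y
    using single_card[of y l] that Y l sum_ind[OF finV, of "\<lambda>x. B x y = l"] unfolding Q_def by auto
  have SN: "real (card Y) * Q ^ d - Q ^ d \<le> Q * (\<Sum>x\<in>V. N x)"
  proof -
    have "(\<Sum>y\<in>Y. (if y = vzero R d then Q ^ d else 0)) \<le> Q ^ d"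
      using finY Q2 by (simp add: sum.delta)
    hence "real (card Y) * Q ^ d - Q ^ d \<le> (\<Sum>y\<in>Y. Q ^ d - (if y = vzero R d then Q ^ d else 0))"
      by (simp add: sum_subtractf)
    also have "\<dots> \<le> (\<Sum>y\<in>Y. Q * (\<Sum>x\<in>V. (if B x y = l then 1 else (0::real))))"
      by (rule sum_mono) (use c1 in auto)
    also have "\<dots> = Q * (\<Sum>x\<in>V. N x)"
      unfolding N_def sum_distrib_left by (rule sum.swap[symmetric])
    finally show ?thesis .
  qed
  have c2: "Q ^ 2 * (\<Sum>x\<in>V. (if B x y = l then 1 else 0) * (if B x y' = l then 1 else (0::real)))
     \<le> (if y = y' then Q * Q ^ d else Q ^ d)" if "y \<in> Y" "y' \<in> Y" for y y'
  proof -
    have e: "(\<Sum>x\<in>V. (if B x y = l then 1 else 0) * (if B x y' = l then 1 else (0::real)))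
       = real (card {x\<in>V. B x y = l \<and> B x y' = l})"
    proof -
      have "(\<Sum>x\<in>V. (if B x y = l then 1 else 0) * (if B x y' = l then 1 else (0::real)))
         = (\<Sum>x\<in>V. if B x y = l \<and> B x y' = l then 1 else 0)" by (rule sum.cong) auto
      thus ?thesis using sum_ind[OF finV, of "\<lambda>x. B x y = l \<and> B x y' = l"] by simp
    qed
    show ?thesis
    proof (cases "y = y'")
      case True
      have "Q * card {x\<in>V. B x y = l} \<le> Q ^ d" using single_card[of y l] that Y l Q2 unfolding Q_def by auto
      hence "Q * (Q * card {x\<in>V. B x y = l}) \<le> Q * Q ^ d" using Q2 by simp
      thus ?thesis using e True by (simp add: power2_eq_square)
    next
      case False
      thus ?thesis using e pair_card[of y y' l] that Y l unfolding Q_def by auto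
    qed
  qed
  have SN2: "Q ^ 2 * (\<Sum>x\<in>V. (N x)\<^sup>2) \<le> real (card Y) * (Q * Q ^ d) + real (card Y) ^ 2 * Q ^ d"
  proof -
    have "Q ^ 2 * (\<Sum>x\<in>V. (N x)\<^sup>2) = (\<Sum>y\<in>Y. \<Sum>y'\<in>Y. Q ^ 2 * (\<Sum>x\<in>V. (if B x y = l then 1 else 0) * (if B x y' = l then 1 else (0::real))))"
    proof -
    define f where "f x y y' = (if B x y = l then 1 else 0) * (if B x y' = l then 1 else (0::real))" for x y y'
    have "(\<Sum>x\<in>V. (N x)\<^sup>2) = (\<Sum>x\<in>V. \<Sum>y\<in>Y. \<Sum>y'\<in>Y. f x y y')"
      unfolding N_def f_def by (simp only: power2_eq_square sum_product)
    also have "\<dots> = (\<Sum>y\<in>Y. \<Sum>x\<in>V. \<Sum>y'\<in>Y. f x y y')" by (rule sum.swap)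
    also have "\<dots> = (\<Sum>y\<in>Y. \<Sum>y'\<in>Y. \<Sum>x\<in>V. f x y y')" by (rule sum.cong[OF refl], rule sum.swap)
    finally have "Q ^ 2 * (\<Sum>x\<in>V. (N x)\<^sup>2) = (\<Sum>y\<in>Y. \<Sum>y'\<in>Y. Q ^ 2 * (\<Sum>x\<in>V. f x y y'))"
      by (simp add: sum_distrib_left)
    thus "Q ^ 2 * (\<Sum>x\<in>V. (N x)\<^sup>2) = (\<Sum>y\<in>Y. \<Sum>y'\<in>Y. Q ^ 2 * (\<Sum>x\<in>V. (if B x y = l then 1 else 0) * (if B x y' = l then 1 else (0::real))))"
      unfolding f_def .
    qed
    also have "\<dots> \<le> (\<Sum>y\<in>Y. \<Sum>y'\<in>Y. (if y = y' then Q * Q ^ d else Q ^ d))"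
      by (intro sum_mono) (use c2 in auto)
    also have "\<dots> \<le> (\<Sum>y\<in>Y. \<Sum>y'\<in>Y. (if y = y' then Q * Q ^ d else 0) + Q ^ d)"
      by (intro sum_mono) (use Q2 in auto)
    also have "\<dots> = real (card Y) * (Q * Q ^ d) + real (card Y) ^ 2 * Q ^ d"
      using finY by (simp add: sum.distrib sum.delta power2_eq_square algebra_simps)
    finally show ?thesis .
  qed
  have "(\<Sum>x\<in>V. (N x - a)\<^sup>2) = (\<Sum>x\<in>V. (N x)\<^sup>2) - 2 * a * (\<Sum>x\<in>V. N x) + real (card V) * a ^ 2"
    by (simp add: power2_diff sum.distrib sum_subtractf sum_distrib_left mult.commute mult.left_commute)
  also have "real (card V) = Q ^ d" unfolding Q_def using cardV by simp
  finally have E: "(\<Sum>x\<in>V. (N x - a)\<^sup>2) = (\<Sum>x\<in>V. (N x)\<^sup>2) - 2 * a * (\<Sum>x\<in>V. N x) + Q ^ d * a ^ 2" .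
  define n where "n = real (card Y)"
  have n0: "n \<ge> 0" unfolding n_def by simp
  have a_n: "a = n / Q" by (simp add: a_def n_def)
  have "(\<Sum>x\<in>V. (N x - a)\<^sup>2) = (\<Sum>x\<in>V. (N x)\<^sup>2) - 2 * (n / Q) * (\<Sum>x\<in>V. N x) + Q ^ d * (n / Q) ^ 2"
    using E a_n by simp
  also have "\<dots> \<le> 2 * (Q ^ d / Q) * n"
    by (rule arith_BE) (use Q2 SN SN2 in \<open>auto simp: n_def\<close>)
  finally show ?thesis unfolding N_def a_def n_def Q_def by simp
qed

lemma BE:
  assumes X: "X \<subseteq> V" and Y: "Y \<subseteq> V" and l: "l \<in> carrier R" "l \<noteq> \<zero>"
  shows "(\<Sum>x\<in>X. \<Sum>y\<in>Y. (if B x y = l then 1 else 0) - 1 / real q)\<^sup>2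
          \<le> 2 * (real q ^ d / q) * card X * card Y"
proof -
  define h where "h x = (\<Sum>y\<in>Y. if B x y = l then 1 else 0) - real (card Y) / q" for x
  have finX: "finite X" using X finV finite_subset by blast
  have "(\<Sum>x\<in>X. \<Sum>y\<in>Y. (if B x y = l then 1 else 0) - 1 / real q) = (\<Sum>x\<in>X. 1 * h x)"
    unfolding h_def by (simp add: sum_subtractf)
  hence "(\<Sum>x\<in>X. \<Sum>y\<in>Y. (if B x y = l then 1 else 0) - 1 / real q)\<^sup>2 \<le> (\<Sum>x\<in>X. 1\<^sup>2) * (\<Sum>x\<in>X. (h x)\<^sup>2)"
    using Cauchy_Schwarz_ineq_sum[of "\<lambda>_. 1" h X] by simp
  also have "\<dots> \<le> real (card X) * (\<Sum>x\<in>V. (h x)\<^sup>2)"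
    using sum_mono2[OF finV X, of "\<lambda>x. (h x)\<^sup>2"] by (simp add: mult_left_mono)
  also have "\<dots> \<le> real (card X) * (2 * (real q ^ d / q) * card Y)"
  proof -
    have hb: "(\<Sum>x\<in>V. (h x)\<^sup>2) \<le> 2 * (real q ^ d / q) * card Y" using BE_V[OF Y l] unfolding h_def .
    show ?thesis using mult_left_mono[OF hb, of "real (card X)"] by simp
  qed
  finally show ?thesis by (simp add: algebra_simps)
qed

end

lemma decomp_sum:
  fixes G :: "(nat \<Rightarrow> 'a) \<Rightarrow> real"
  assumes "u \<in> I" "v \<in> I" "u \<noteq> v"
  shows "(\<Sum>f\<in>PiE I A. G f) = (\<Sum>r\<in>PiE (I - {u, v}) A. \<Sum>x\<in>A u. \<Sum>y\<in>A v. G (r(u := x, v := y)))"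
proof -
  define h where "h = (\<lambda>(r, x, y). (r(u := x, v := y)) :: nat \<Rightarrow> 'a)"
  define g where "g = (\<lambda>f :: nat \<Rightarrow> 'a. (f(u := undefined, v := undefined), f u, f v))"
  have bij: "bij_betw h (PiE (I - {u, v}) A \<times> (A u \<times> A v)) (PiE I A)"
  proof (rule bij_betwI[where g = g])
    show "h \<in> PiE (I - {u, v}) A \<times> (A u \<times> A v) \<rightarrow> PiE I A"
    proof
      fix p assume p: "p \<in> PiE (I - {u, v}) A \<times> (A u \<times> A v)"
      obtain r x y where rxy: "p = (r, x, y)" by (cases p) auto
      have r: "r \<in> PiE (I - {u, v}) A" and x: "x \<in> A u" and y: "y \<in> A v" using p rxy by auto
      have "r(u := x, v := y) \<in> PiE I A"
      proof (rule PiE_I)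
        fix i assume "i \<in> I"
        thus "(r(u := x, v := y)) i \<in> A i" using r x y by (cases "i = u"; cases "i = v") auto
      next
        fix i assume "i \<notin> I"
        thus "(r(u := x, v := y)) i = undefined" using r assms by auto
      qed
      thus "h p \<in> PiE I A" unfolding h_def rxy by simp
    qed
    show "g \<in> PiE I A \<rightarrow> PiE (I - {u, v}) A \<times> (A u \<times> A v)"
    proof
      fix f assume f: "f \<in> PiE I A"
      have "f(u := undefined, v := undefined) \<in> PiE (I - {u, v}) A"
      proof (rule PiE_I)
        fix i assume "i \<in> I - {u, v}"
        thus "(f(u := undefined, v := undefined)) i \<in> A i" using f by auto
      next
        fix i assume "i \<notin> I - {u, v}"
        thus "(f(u := undefined, v := undefined)) i = undefined" using f by (cases "i \<in> I") auto
      qed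
      moreover have "f u \<in> A u" "f v \<in> A v" using f assms by auto
      ultimately show "g f \<in> PiE (I - {u, v}) A \<times> (A u \<times> A v)" unfolding g_def by simp
    qed
    show "g (h p) = p" if "p \<in> PiE (I - {u, v}) A \<times> (A u \<times> A v)" for p
    proof -
      obtain r x y where rxy: "p = (r, x, y)" by (cases p) auto
      have r: "r \<in> PiE (I - {u, v}) A" using that rxy by auto
      have "r u = undefined" "r v = undefined" using r by auto
      hence "(r(u := x, v := y))(u := undefined, v := undefined) = r" by (auto simp: fun_eq_iff)
      thus ?thesis unfolding g_def h_def rxy using assms(3) by simp
    qed
    show "h (g f) = f" if "f \<in> PiE I A" for f
      unfolding g_def h_def by (simp add: fun_eq_iff)
  qed
  have "(\<Sum>f\<in>PiE I A. G f) = (\<Sum>p\<in>PiE (I - {u, v}) A \<times> (A u \<times> A v). G (h p))"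
    using sum.reindex_bij_betw[OF bij, of G] by simp
  also have "\<dots> = (\<Sum>r\<in>PiE (I - {u, v}) A. \<Sum>x\<in>A u. \<Sum>y\<in>A v. G (r(u := x, v := y)))"
    unfolding h_def by (simp add: sum.cartesian_product split_def)
  finally show ?thesis .
qed


locale sys = bfq +
  fixes k :: nat and E :: "(nat \<times> nat) set" and A :: "nat \<Rightarrow> 'a list set"
    and lam :: "nat \<times> nat \<Rightarrow> 'a" and t :: nat
  assumes edge: "edge_set k E"
    and AV: "\<forall>i<k. A i \<subseteq> V"
    and lamnz: "\<forall>e\<in>E. lam e \<in> carrier R - {\<zero>}"
    and Ane: "\<forall>i<k. card (A i) > 0"
begin

definition "P = PiE {..<k} A"
definition sat where "sat F f \<longleftrightarrow> (\<forall>(i,j)\<in>F. B (f i) (f j) = lam (i,j))"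
definition S where "S F = real (card {f\<in>P. sat F f})"

lemma edgeD: "(i, j) \<in> E \<Longrightarrow> i < k \<and> j < k \<and> i \<noteq> j \<and> (j, i) \<notin> E"
  using edge unfolding edge_set_def by blast

lemma finE: "finite E"
proof -
  have "E \<subseteq> {..<k} \<times> {..<k}" using edgeD by auto
  thus ?thesis using finite_subset by blast
qed

lemma finA: "i < k \<Longrightarrow> finite (A i)" using AV finV finite_subset by blast

lemma finP: "finite P" unfolding P_def using finA by (intro finite_PiE) auto

lemma S_sum: "S F = (\<Sum>f\<in>P. if sat F f then 1 else 0)"
  unfolding S_def using sum_ind[OF finP, of "sat F"] by simp

lemma S_empty: "S {} = (\<Prod>i<k. real (card (A i)))"
  unfolding S_def sat_def P_def by (simp add: card_PiE)

lemma sat_Un: "sat (F1 \<union> F2) f \<longleftrightarrow> sat F1 f \<and> sat F2 f"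
  unfolding sat_def by blast

lemma sat_cong: "(\<And>i j. (i, j) \<in> F \<Longrightarrow> f i = g i \<and> f j = g j) \<Longrightarrow> sat F f = sat F g"
  unfolding sat_def by auto

lemma S_nonneg: "S F \<ge> 0" unfolding S_def by simp

lemma peel:
  assumes F: "F \<subseteq> E" and uv: "(u, v) \<in> F"
  shows "(S F - S (F - {(u, v)}) / q)\<^sup>2
     \<le> 2 * (real q ^ d / q) * (S {e\<in>F. fst e \<noteq> v \<and> snd e \<noteq> v} / card (A v))
          * (S {e\<in>F. fst e \<noteq> u \<and> snd e \<noteq> u} / card (A u))"
proof -
  have uvE: "(u, v) \<in> E" using F uv by blast
  have u: "u < k" and v: "v < k" and uv_ne: "u \<noteq> v" and vu: "(v, u) \<notin> E" using edgeD[OF uvE] by auto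
  define l where "l = lam (u, v)"
  have l: "l \<in> carrier R" "l \<noteq> \<zero>" using lamnz uvE unfolding l_def by auto
  define F2 where "F2 = F - {(u, v)}"
  define E0 where "E0 = {e\<in>F2. fst e \<noteq> u \<and> snd e \<noteq> u \<and> fst e \<noteq> v \<and> snd e \<noteq> v}"
  define Eu where "Eu = {e\<in>F2. fst e = u \<or> snd e = u}"
  define Ev where "Ev = {e\<in>F2. fst e = v \<or> snd e = v}"
  define Fv where "Fv = {e\<in>F. fst e \<noteq> v \<and> snd e \<noteq> v}"
  define Fu where "Fu = {e\<in>F. fst e \<noteq> u \<and> snd e \<noteq> u}"
  have key: "fst e \<noteq> v \<and> snd e \<noteq> v" if "e \<in> Eu" for e
  proof -
    obtain i j where e: "e = (i, j)" by (cases e)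
    have "(i, j) \<in> E" "(i, j) \<noteq> (u, v)" using that F unfolding Eu_def F2_def e by auto
    moreover have "i = u \<or> j = u" using that unfolding Eu_def e by auto
    ultimately show ?thesis using edgeD[of i j] vu uv_ne uvE unfolding e by auto
  qed
  have keyv: "fst e \<noteq> u \<and> snd e \<noteq> u" if "e \<in> Ev" for e
  proof -
    obtain i j where e: "e = (i, j)" by (cases e)
    have "(i, j) \<in> E" "(i, j) \<noteq> (u, v)" using that F unfolding Ev_def F2_def e by auto
    moreover have "i = v \<or> j = v" using that unfolding Ev_def e by auto
    ultimately show ?thesis using edgeD[of i j] vu uv_ne uvE unfolding e by auto
  qed
  have F2eq: "F2 = E0 \<union> Eu \<union> Ev" unfolding E0_def Eu_def Ev_def by auto
  have Fveq: "Fv = E0 \<union> Eu" unfolding Fv_def using key unfolding E0_def Eu_def F2_def by auto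
  have Fueq: "Fu = E0 \<union> Ev" unfolding Fu_def using keyv unfolding E0_def Ev_def F2_def by auto
  have satF: "sat F f \<longleftrightarrow> sat F2 f \<and> B (f u) (f v) = l" for f
    unfolding sat_def F2_def l_def using uv by auto
  have s0: "sat E0 (r(u := x, v := y)) = sat E0 r" for r x y
    by (rule sat_cong) (auto simp: E0_def)
  have su: "sat Eu (r(u := x, v := y)) = sat Eu (r(u := x))" for r x y
    by (rule sat_cong) (use key in force)
  have sv: "sat Ev (r(u := x, v := y)) = sat Ev (r(v := y))" for r x y
    by (rule sat_cong) (use keyv in force)
  have satF2: "sat F2 (r(u := x, v := y)) \<longleftrightarrow> sat E0 r \<and> sat Eu (r(u := x)) \<and> sat Ev (r(v := y))" for r x y
    unfolding F2eq sat_Un s0 su sv by simp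
  have satFv: "sat Fv (r(u := x, v := y)) \<longleftrightarrow> sat E0 r \<and> sat Eu (r(u := x))" for r x y
    unfolding Fveq sat_Un s0 su by simp
  have satFu: "sat Fu (r(u := x, v := y)) \<longleftrightarrow> sat E0 r \<and> sat Ev (r(v := y))" for r x y
    unfolding Fueq sat_Un s0 sv by simp
  define P' where "P' = PiE ({..<k} - {u, v}) A"
  define Xs where "Xs r = {x\<in>A u. sat Eu (r(u := x))}" for r
  define Ys where "Ys r = {y\<in>A v. sat Ev (r(v := y))}" for r
  define W where "W r = (if sat E0 r then 1 else (0::real))" for r
  define ind where "ind x y = (if B x y = l then 1 else (0::real))" for x y
  define inner where "inner r = (\<Sum>x\<in>Xs r. \<Sum>y\<in>Ys r. ind x y - 1 / real q)" for r
  have finAu: "finite (A u)" and finAv: "finite (A v)" using finA u v by auto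
  have decomp: "(\<Sum>f\<in>P. G f) = (\<Sum>r\<in>P'. \<Sum>x\<in>A u. \<Sum>y\<in>A v. G (r(u := x, v := y)))" for G :: "(nat \<Rightarrow> 'a list) \<Rightarrow> real"
    unfolding P_def P'_def by (rule decomp_sum) (use u v uv_ne in auto)
  define G where "G f = (if sat F2 f then 1 else 0) * (ind (f u) (f v) - 1 / real q)" for f
  have step1: "S F - S F2 / q = (\<Sum>f\<in>P. G f)"
  proof -
    have "S F - S F2 / q = (\<Sum>f\<in>P. (if sat F f then 1 else 0) - (if sat F2 f then 1 else 0) / real q)"
      unfolding S_sum by (simp add: sum_subtractf sum_divide_distrib)
    also have "\<dots> = (\<Sum>f\<in>P. G f)"
      by (rule sum.cong) (auto simp: G_def satF ind_def)
    finally show ?thesis .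
  qed
  have step3: "(\<Sum>x\<in>A u. \<Sum>y\<in>A v. G (r(u := x, v := y))) = W r * inner r" for r
  proof -
    have "(\<Sum>x\<in>A u. \<Sum>y\<in>A v. G (r(u := x, v := y)))
       = (\<Sum>x\<in>A u. \<Sum>y\<in>A v. W r * (if sat Eu (r(u := x)) then (if sat Ev (r(v := y)) then ind x y - 1 / real q else 0) else 0))"
      unfolding G_def W_def satF2 using uv_ne by (intro sum.cong refl) auto
    also have "\<dots> = W r * (\<Sum>x\<in>A u. if sat Eu (r(u := x)) then (\<Sum>y\<in>A v. if sat Ev (r(v := y)) then ind x y - 1 / real q else 0) else 0)"
    proof -
      have "(\<Sum>y\<in>A v. W r * (if sat Eu (r(u := x)) then (if sat Ev (r(v := y)) then ind x y - 1 / real q else 0) else 0))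
        = W r * (if sat Eu (r(u := x)) then (\<Sum>y\<in>A v. if sat Ev (r(v := y)) then ind x y - 1 / real q else 0) else 0)" for x
        by (cases "sat Eu (r(u := x))") (simp_all add: sum_distrib_left)
      thus ?thesis by (simp add: sum_distrib_left)
    qed
    also have "\<dots> = W r * inner r"
      unfolding inner_def Xs_def Ys_def using finAu finAv by (simp add: sum.inter_filter)
    finally show ?thesis .
  qed
  have Err: "S F - S F2 / q = (\<Sum>r\<in>P'. W r * inner r)"
    unfolding step1 decomp step3 ..
  have Sv: "S Fv = real (card (A v)) * (\<Sum>r\<in>P'. W r * card (Xs r))"
  proof -
    have "S Fv = (\<Sum>r\<in>P'. \<Sum>x\<in>A u. \<Sum>y\<in>A v. if sat Fv (r(u := x, v := y)) then 1 else 0)"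
      unfolding S_sum decomp ..
    also have "\<dots> = (\<Sum>r\<in>P'. \<Sum>x\<in>A u. real (card (A v)) * (W r * (if sat Eu (r(u := x)) then 1 else 0)))"
      unfolding satFv W_def by (intro sum.cong refl) auto
    also have "\<dots> = real (card (A v)) * (\<Sum>r\<in>P'. W r * card (Xs r))"
      unfolding Xs_def sum_distrib_left by (intro sum.cong refl) (simp add: sum_distrib_left[symmetric] sum_ind[OF finAu])
    finally show ?thesis .
  qed
  have Su: "S Fu = real (card (A u)) * (\<Sum>r\<in>P'. W r * card (Ys r))"
  proof -
    have "S Fu = (\<Sum>r\<in>P'. \<Sum>x\<in>A u. \<Sum>y\<in>A v. if sat Fu (r(u := x, v := y)) then 1 else 0)"
      unfolding S_sum decomp ..
    also have "\<dots> = (\<Sum>r\<in>P'. real (card (A u)) * (W r * (\<Sum>y\<in>A v. if sat Ev (r(v := y)) then 1 else 0)))"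
      unfolding satFu W_def by (intro sum.cong refl) (auto simp: sum_distrib_left)
    also have "\<dots> = real (card (A u)) * (\<Sum>r\<in>P'. W r * card (Ys r))"
      unfolding Ys_def sum_distrib_left[of "real (card (A u))"] by (intro sum.cong refl) (simp add: sum_ind[OF finAv])
    finally show ?thesis .
  qed
  define c2 where "c2 = 2 * (real q ^ d / q)"
  have c2: "c2 \<ge> 0" unfolding c2_def by simp
  define a where "a r = W r * card (Xs r)" for r
  define b where "b r = W r * card (Ys r)" for r
  have a0: "a r \<ge> 0" and b0: "b r \<ge> 0" for r unfolding a_def b_def W_def by auto
  have bound_r: "\<bar>W r * inner r\<bar> \<le> sqrt c2 * (sqrt (a r) * sqrt (b r))" for r
  proof (cases "sat E0 r")
    case False thus ?thesis unfolding W_def a_def b_def by simp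
  next
    case True
    have XV: "Xs r \<subseteq> V" using AV u unfolding Xs_def by auto
    have YV: "Ys r \<subseteq> V" using AV v unfolding Ys_def by auto
    have "(inner r)\<^sup>2 \<le> c2 * card (Xs r) * card (Ys r)"
      unfolding inner_def ind_def c2_def using BE[OF XV YV l] by simp
    hence "sqrt ((inner r)\<^sup>2) \<le> sqrt (c2 * card (Xs r) * card (Ys r))" by (rule real_sqrt_le_mono)
    hence "\<bar>inner r\<bar> \<le> sqrt c2 * (sqrt (card (Xs r)) * sqrt (card (Ys r)))"
      by (simp add: real_sqrt_mult mult.assoc)
    thus ?thesis using True unfolding W_def a_def b_def by simp
  qed
  have "\<bar>S F - S F2 / q\<bar> \<le> (\<Sum>r\<in>P'. \<bar>W r * inner r\<bar>)" unfolding Err by (rule sum_abs)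
  also have "\<dots> \<le> (\<Sum>r\<in>P'. sqrt c2 * (sqrt (a r) * sqrt (b r)))" by (rule sum_mono) (rule bound_r)
  also have "\<dots> = sqrt c2 * (\<Sum>r\<in>P'. sqrt (a r) * sqrt (b r))" by (simp add: sum_distrib_left)
  finally have e1: "\<bar>S F - S F2 / q\<bar> \<le> sqrt c2 * (\<Sum>r\<in>P'. sqrt (a r) * sqrt (b r))" .
  have cs: "(\<Sum>r\<in>P'. sqrt (a r) * sqrt (b r))\<^sup>2 \<le> (\<Sum>r\<in>P'. a r) * (\<Sum>r\<in>P'. b r)"
    using Cauchy_Schwarz_ineq_sum[of "\<lambda>r. sqrt (a r)" "\<lambda>r. sqrt (b r)" P'] a0 b0 by simp
  have "(S F - S F2 / q)\<^sup>2 = \<bar>S F - S F2 / q\<bar>\<^sup>2" by simp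
  also have "\<dots> \<le> (sqrt c2 * (\<Sum>r\<in>P'. sqrt (a r) * sqrt (b r)))\<^sup>2"
    by (rule power_mono[OF e1]) simp
  also have "\<dots> = c2 * (\<Sum>r\<in>P'. sqrt (a r) * sqrt (b r))\<^sup>2" using c2 by (simp add: power_mult_distrib)
  also have "\<dots> \<le> c2 * ((\<Sum>r\<in>P'. a r) * (\<Sum>r\<in>P'. b r))" using cs c2 by (rule mult_left_mono)
  finally have e2: "(S F - S F2 / q)\<^sup>2 \<le> c2 * ((\<Sum>r\<in>P'. a r) * (\<Sum>r\<in>P'. b r))" .
  have Av: "real (card (A v)) > 0" and Au: "real (card (A u)) > 0" using Ane u v by auto
  have "(\<Sum>r\<in>P'. a r) = S Fv / card (A v)" unfolding Sv a_def using Av by simp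
  moreover have "(\<Sum>r\<in>P'. b r) = S Fu / card (A u)" unfolding Su b_def using Au by simp
  ultimately show ?thesis using e2 unfolding c2_def F2_def Fv_def Fu_def by (simp add: mult.assoc)
qed

end


lemma err_arith:
  fixes X1 X2 a b z T C D Er :: real
  assumes X1: "0 \<le> X1" "X1 \<le> z * T" and X2: "0 \<le> X2" "X2 \<le> z * T"
    and ab: "C\<^sup>2 * D * T\<^sup>2 \<le> a * b" and pos: "C > 0" "D > 0" "T > 0" "a > 0" "b > 0"
    and Er: "Er\<^sup>2 \<le> 2 * D * (X1 / b) * (X2 / a)"
  shows "Er\<^sup>2 \<le> 2 / C\<^sup>2 * z\<^sup>2"
proof -
  have zT: "z * T \<ge> 0" using X1 by linarith
  have "X1 * X2 \<le> (z * T) * (z * T)" using mult_mono[OF X1(2) X2(2) zT X2(1)] .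
  hence "2 * D * (X1 * X2) \<le> 2 * D * ((z * T) * (z * T))" using pos by (intro mult_left_mono) auto
  hence "2 * D * (X1 * X2) / (a * b) \<le> 2 * D * ((z * T) * (z * T)) / (a * b)"
    using pos by (intro divide_right_mono) auto
  also have "\<dots> \<le> 2 * D * ((z * T) * (z * T)) / (C\<^sup>2 * D * T\<^sup>2)"
    using pos ab by (intro divide_left_mono) (auto intro!: mult_pos_pos)
  also have "\<dots> = 2 / C\<^sup>2 * z\<^sup>2" using pos by (simp add: field_simps power2_eq_square)
  finally have "2 * D * (X1 * X2) / (a * b) \<le> 2 / C\<^sup>2 * z\<^sup>2" .
  moreover have "2 * D * (X1 / b) * (X2 / a) = 2 * D * (X1 * X2) / (a * b)" using pos by (simp add: field_simps)
  ultimately show ?thesis using Er by linarith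
qed

locale sys2 = sys +
  fixes C :: real
  assumes deg: "\<forall>i<k. degree_in E i \<le> t"
    and Abig: "\<forall>i<k. real (card (A i)) \<ge> C * real q powr ((real d - 1) / 2 + real t)"
    and Cpos: "C > 0"
begin

definition "dl = sqrt 2 / C"
definition "PA = (\<Prod>i<k. real (card (A i)))"

lemma dl_pos: "dl \<ge> 0" unfolding dl_def using Cpos by simp
lemma dl_sq: "dl\<^sup>2 = 2 / C\<^sup>2" unfolding dl_def by (simp add: power_divide)
lemma PA_nonneg: "PA \<ge> 0" unfolding PA_def by (simp add: prod_nonneg)

lemma Qpos: "real q > 0" using q_ge2 by simp

lemma Zsq: "(real q powr ((real d - 1) / 2 + real t))\<^sup>2 = (real q ^ d / q) * real q ^ t * real q ^ t"
proof -
  have "(real q powr ((real d - 1) / 2 + real t))\<^sup>2 = real q powr ((real d - 1) / 2 + real t + ((real d - 1) / 2 + real t))"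
    by (simp add: power2_eq_square powr_add[symmetric])
  also have "(real d - 1) / 2 + real t + ((real d - 1) / 2 + real t) = real (d + t + t) - 1" by simp
  also have "real q powr (real (d + t + t) - 1) = real q powr real (d + t + t) / real q powr 1" by (rule powr_diff)
  also have "\<dots> = real q ^ (d + t + t) / real q" using Qpos by (subst powr_realpow[OF Qpos]) simp
  finally show ?thesis by (simp add: power_add)
qed

lemma AA: assumes "u < k" "v < k"
  shows "C\<^sup>2 * (real q ^ d / q) * (real q ^ t)\<^sup>2 \<le> real (card (A u)) * real (card (A v))"
proof -
  define Z where "Z = real q powr ((real d - 1) / 2 + real t)"
  have Z0: "C * Z \<ge> 0" unfolding Z_def using Cpos by simp
  have "(C * Z) * (C * Z) \<le> real (card (A u)) * real (card (A v))"
    using mult_mono[of "C * Z" "real (card (A u))" "C * Z" "real (card (A v))"] Abig assms Z0 unfolding Z_def by auto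
  moreover have "(C * Z) * (C * Z) = C\<^sup>2 * (real q ^ d / q) * (real q ^ t)\<^sup>2"
    using Zsq unfolding Z_def by (simp add: power2_eq_square algebra_simps)
  ultimately show ?thesis by simp
qed

lemma main: "F \<subseteq> E \<Longrightarrow> \<bar>S F - PA / real q ^ card F\<bar> \<le> ((1 + dl) ^ card F - 1) * PA / real q ^ card F"
proof (induct "card F" arbitrary: F rule: less_induct)
  case less
  define Q where "Q = real q"
  have Q: "Q > 0" using Qpos unfolding Q_def .
  have finF: "finite F" using less.prems finE finite_subset by blast
  show ?case
  proof (cases "F = {}")
    case True thus ?thesis using S_empty unfolding PA_def by simp
  next
    case False
    then obtain u v where uv: "(u, v) \<in> F" by auto
    have uvE: "(u, v) \<in> E" using uv less.prems by blast
    have u: "u < k" and v: "v < k" using edgeD[OF uvE] by auto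
    define m where "m = card F"
    have m1: "m \<ge> 1" using False finF unfolding m_def by (simp add: Suc_le_eq card_gt_0_iff)
    have UB: "S G \<le> (1 + dl) ^ card G * PA / Q ^ card G" if "G \<subseteq> E" "card G < m" for G
    proof -
      have "\<bar>S G - PA / real q ^ card G\<bar> \<le> ((1 + dl) ^ card G - 1) * PA / real q ^ card G"
        using less.hyps that unfolding m_def by blast
      thus ?thesis unfolding Q_def by (simp add: algebra_simps diff_divide_distrib abs_le_iff)
    qed
    define z where "z = (1 + dl) ^ (m - 1) * PA / Q ^ m"
    have z0: "z \<ge> 0" unfolding z_def using dl_pos PA_nonneg Q by simp
    have Bw: "S {e\<in>F. fst e \<noteq> w \<and> snd e \<noteq> w} \<le> z * Q ^ t" if w: "w = u \<or> w = v" for w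
    proof -
      define G where "G = {e\<in>F. fst e \<noteq> w \<and> snd e \<noteq> w}"
      define D where "D = {e\<in>F. fst e = w \<or> snd e = w}"
      have wk: "w < k" using w u v by auto
      have GD: "G \<union> D = F" "G \<inter> D = {}" unfolding G_def D_def by auto
      have finG: "finite G" "finite D" using finF unfolding G_def D_def by auto
      have cGD: "card G + card D = m" unfolding m_def using card_Un_disjoint[OF finG GD(2)] GD(1) by simp
      have "(u, v) \<in> D" unfolding D_def using uv w by auto
      hence D1: "card D \<ge> 1" using finG(2) by (metis One_nat_def Suc_leI card_gt_0_iff empty_iff)
      have "D \<subseteq> {e\<in>E. fst e = w \<or> snd e = w}" unfolding D_def using less.prems by auto
      hence "card D \<le> degree_in E w" unfolding degree_in_def by (rule card_mono[rotated]) (use finE in simp)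
      hence Dt: "card D \<le> t" using deg wk by fastforce
      have GE: "G \<subseteq> E" unfolding G_def using less.prems by auto
      have Gm: "card G < m" "card G \<le> m - 1" using cGD D1 by auto
      have "S G \<le> (1 + dl) ^ card G * PA / Q ^ card G" using UB[OF GE Gm(1)] unfolding G_def .
      also have "\<dots> \<le> (1 + dl) ^ (m - 1) * PA / Q ^ card G"
        using Gm dl_pos PA_nonneg Q by (intro divide_right_mono mult_right_mono power_increasing) auto
      also have "\<dots> = (1 + dl) ^ (m - 1) * PA * Q ^ card D / Q ^ m"
      proof -
        have "Q ^ m = Q ^ card G * Q ^ card D" using cGD by (metis power_add)
        thus ?thesis using Q by (simp add: field_simps)
      qed
      also have "\<dots> \<le> (1 + dl) ^ (m - 1) * PA * Q ^ t / Q ^ m"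
      proof -
        have "Q ^ card D \<le> Q ^ t" using Dt Q q_ge2 unfolding Q_def by (intro power_increasing) auto
        thus ?thesis using dl_pos PA_nonneg Q by (intro divide_right_mono mult_left_mono) auto
      qed
      also have "\<dots> = z * Q ^ t" unfolding z_def by simp
      finally show ?thesis unfolding G_def .
    qed
    define Er where "Er = S F - S (F - {(u, v)}) / q"
    have pe: "Er\<^sup>2 \<le> 2 * (Q ^ d / Q) * (S {e\<in>F. fst e \<noteq> v \<and> snd e \<noteq> v} / card (A v))
          * (S {e\<in>F. fst e \<noteq> u \<and> snd e \<noteq> u} / card (A u))"
      using peel[OF less.prems uv] unfolding Er_def Q_def .
    have Er2: "Er\<^sup>2 \<le> 2 / C\<^sup>2 * z\<^sup>2"
    proof (rule err_arith[where D = "Q ^ d / Q" and T = "Q ^ t" and a = "real (card (A u))" and b = "real (card (A v))"])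
      show "0 \<le> S {e\<in>F. fst e \<noteq> v \<and> snd e \<noteq> v}" "0 \<le> S {e\<in>F. fst e \<noteq> u \<and> snd e \<noteq> u}" by (rule S_nonneg)+
      show "S {e\<in>F. fst e \<noteq> v \<and> snd e \<noteq> v} \<le> z * Q ^ t" "S {e\<in>F. fst e \<noteq> u \<and> snd e \<noteq> u} \<le> z * Q ^ t"
        using Bw by auto
      show "C\<^sup>2 * (Q ^ d / Q) * (Q ^ t)\<^sup>2 \<le> real (card (A u)) * real (card (A v))" using AA[OF u v] unfolding Q_def .
      show "C > 0" "Q ^ d / Q > 0" "Q ^ t > 0" using Cpos Q by auto
      show "real (card (A u)) > 0" "real (card (A v)) > 0" using Ane u v by auto
      show "Er\<^sup>2 \<le> 2 * (Q ^ d / Q) * (S {e\<in>F. fst e \<noteq> v \<and> snd e \<noteq> v} / real (card (A v)))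
          * (S {e\<in>F. fst e \<noteq> u \<and> snd e \<noteq> u} / real (card (A u)))" using pe .
    qed
    have ErB: "\<bar>Er\<bar> \<le> dl * z"
    proof -
      have "Er\<^sup>2 \<le> (dl * z)\<^sup>2" using Er2 dl_sq by (simp add: power_mult_distrib)
      thus ?thesis using dl_pos z0 by (metis abs_le_square_iff abs_of_nonneg zero_le_mult_iff)
    qed
    define F2 where "F2 = F - {(u, v)}"
    have cF2: "card F2 = m - 1" unfolding F2_def m_def using uv finF by simp
    have IH2: "\<bar>S F2 - PA / Q ^ (m - 1)\<bar> \<le> ((1 + dl) ^ (m - 1) - 1) * PA / Q ^ (m - 1)"
      using less.hyps[of F2] cF2 m1 less.prems unfolding F2_def m_def Q_def by auto
    have Qm: "Q ^ m = Q * Q ^ (m - 1)" using m1 by (metis Suc_diff_le diff_Suc_1 power_Suc)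
    have "S F - PA / Q ^ m = (S F2 - PA / Q ^ (m - 1)) / Q + Er"
      unfolding Er_def F2_def Q_def[symmetric] Qm using Q by (simp add: field_simps)
    hence "\<bar>S F - PA / Q ^ m\<bar> \<le> \<bar>S F2 - PA / Q ^ (m - 1)\<bar> / Q + \<bar>Er\<bar>"
      using Q by (simp add: abs_triangle_ineq order_trans[OF abs_triangle_ineq])
    also have "\<dots> \<le> ((1 + dl) ^ (m - 1) - 1) * PA / Q ^ (m - 1) / Q + dl * z"
      using IH2 ErB Q by (intro add_mono divide_right_mono) auto
    also have "\<dots> = ((1 + dl) ^ m - 1) * PA / Q ^ m"
    proof -
      have "(1 + dl) ^ m = (1 + dl) * (1 + dl) ^ (m - 1)" using m1 by (metis Suc_diff_le diff_Suc_1 power_Suc)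
      thus ?thesis unfolding z_def Qm using Q by (simp add: field_simps)
    qed
    finally show ?thesis unfolding m_def Q_def .
  qed
qed

end


context sys
begin

lemma num_sol: "num_solutions R B k E A lam = card {f\<in>P. sat E f}"
proof -
  define LS where "LS = {as. length as = k \<and> (\<forall>i<k. as ! i \<in> A i) \<and> (\<forall>(i,j)\<in>E. B (as ! i) (as ! j) = lam (i,j))}"
  define g where "g as = (\<lambda>i. if i < k then as ! i else undefined)" for as :: "'a list list"
  define h where "h f = map f [0..<k]" for f :: "nat \<Rightarrow> 'a list"
  have "bij_betw g LS {f\<in>P. sat E f}"
  proof (rule bij_betwI[where g = h])
    show "g \<in> LS \<rightarrow> {f\<in>P. sat E f}"
    proof
      fix as assume as: "as \<in> LS"
      have "g as \<in> P" unfolding P_def g_def using as unfolding LS_def by (auto simp: PiE_iff extensional_def)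
      moreover have "sat E (g as)" unfolding sat_def g_def using as edgeD unfolding LS_def by fastforce
      ultimately show "g as \<in> {f\<in>P. sat E f}" by simp
    qed
    show "h \<in> {f\<in>P. sat E f} \<rightarrow> LS"
    proof
      fix f assume f: "f \<in> {f\<in>P. sat E f}"
      have "length (h f) = k" unfolding h_def by simp
      moreover have "\<forall>i<k. h f ! i \<in> A i" using f unfolding h_def P_def by auto
      moreover have "\<forall>(i,j)\<in>E. B (h f ! i) (h f ! j) = lam (i,j)"
        using f edgeD unfolding h_def sat_def by fastforce
      ultimately show "h f \<in> LS" unfolding LS_def by simp
    qed
    show "h (g as) = as" if "as \<in> LS" for as
      using that unfolding LS_def g_def h_def by (intro nth_equalityI) auto
    show "g (h f) = f" if "f \<in> {f\<in>P. sat E f}" for f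
      using that unfolding g_def h_def P_def by (auto simp: fun_eq_iff PiE_iff extensional_def)
  qed
  hence "card LS = card {f\<in>P. sat E f}" by (rule bij_betw_same_card)
  thus ?thesis unfolding num_solutions_def LS_def .
qed

end

lemma pow_arith: "0 \<le> (x::real) \<Longrightarrow> (1 + x) ^ n - 1 \<le> real n * x * (1 + x) ^ n"
proof (induct n)
  case 0 thus ?case by simp
next
  case (Suc n)
  have "(1 + x) ^ Suc n - 1 = (1 + x) * ((1 + x) ^ n - 1) + x" by (simp add: algebra_simps)
  also have "\<dots> \<le> (1 + x) * (real n * x * (1 + x) ^ n) + x * (1 + x) ^ Suc n"
  proof (intro add_mono mult_left_mono)
    have "1 \<le> (1 + x) ^ Suc n" using Suc.prems by (intro one_le_power) simp
    thus "x \<le> x * (1 + x) ^ Suc n" using Suc.prems mult_left_mono[of 1 "(1 + x) ^ Suc n" x] by simp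
  qed (use Suc in auto)
  also have "\<dots> = real (Suc n) * x * (1 + x) ^ Suc n" by (simp add: algebra_simps)
  finally show ?case .
qed

lemma pow_arith2:
  assumes "0 \<le> x" "x \<le> 1" "x \<le> e / (real n * 2 ^ n + 1)" "e > 0"
  shows "(1 + x) ^ n - 1 \<le> e"
proof -
  have "(1 + x) ^ n - 1 \<le> real n * x * (1 + x) ^ n" using pow_arith assms by blast
  also have "\<dots> \<le> real n * x * 2 ^ n" using assms by (intro mult_left_mono power_mono) auto
  also have "\<dots> = x * (real n * 2 ^ n)" by simp
  also have "\<dots> \<le> e / (real n * 2 ^ n + 1) * (real n * 2 ^ n)" using assms by (intro mult_right_mono) auto
  also have "\<dots> \<le> e"
  proof -
    have p: "real n * 2 ^ n + 1 > 0" by (simp add: add_nonneg_pos)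
    have "e * (real n * 2 ^ n) \<le> e * (real n * 2 ^ n + 1)" using assms by simp
    thus ?thesis using p by (simp add: divide_le_eq mult.commute)
  qed
  finally show ?thesis .
qed


theorem theorem1p1:
  fixes d k t :: nat and E :: "(nat \<times> nat) set"
  assumes "d \<ge> 1" and "k \<ge> 2" and "1 \<le> t" and "t \<le> k - 1"
    and "edge_set k E"
    and "\<forall>i<k. degree_in E i \<le> t"
  shows "\<forall>\<epsilon>>0. \<exists>C>0. \<forall>(R :: nat ring) (B :: nat list \<Rightarrow> nat list \<Rightarrow> nat)
            (A :: nat \<Rightarrow> nat list set) (lam :: nat \<times> nat \<Rightarrow> nat).
     field R \<longrightarrow> finite (carrier R) \<longrightarrow>
     bilinear_form R d B \<longrightarrow> nondegenerate R d B \<longrightarrow>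
     (\<forall>i<k. A i \<subseteq> fvecs R d \<and>
        real (card (A i)) \<ge> C * real (card (carrier R)) powr ((real d - 1) / 2 + real t)) \<longrightarrow>
     (\<forall>e\<in>E. lam e \<in> carrier R - {\<zero>\<^bsub>R\<^esub>}) \<longrightarrow>
     \<bar>real (num_solutions R B k E A lam)
        - real (card (carrier R)) powi (- int (card E)) * (\<Prod>i<k. real (card (A i)))\<bar>
       \<le> \<epsilon> * real (card (carrier R)) powi (- int (card E)) * (\<Prod>i<k. real (card (A i)))"
proof (intro allI impI)
  fix \<epsilon> :: real assume \<epsilon>: "\<epsilon> > 0"
  define L where "L = card E"
  define dl0 where "dl0 = min 1 (\<epsilon> / (real L * 2 ^ L + 1))"
  have p: "real L * 2 ^ L + 1 > 0" by (simp add: add_nonneg_pos)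
  have dl0: "dl0 > 0" "dl0 \<le> 1" "dl0 \<le> \<epsilon> / (real L * 2 ^ L + 1)"
    unfolding dl0_def using \<epsilon> p by auto
  define C where "C = sqrt 2 / dl0"
  have Cpos: "C > 0" unfolding C_def using dl0 by simp
  have dlC: "sqrt 2 / C = dl0" unfolding C_def using dl0 by simp
  have pw: "(1 + dl0) ^ L - 1 \<le> \<epsilon>" using pow_arith2[of dl0 \<epsilon> L] dl0 \<epsilon> by simp
  show "\<exists>C>0. \<forall>(R :: nat ring) (B :: nat list \<Rightarrow> nat list \<Rightarrow> nat)
            (A :: nat \<Rightarrow> nat list set) (lam :: nat \<times> nat \<Rightarrow> nat).
     field R \<longrightarrow> finite (carrier R) \<longrightarrow>
     bilinear_form R d B \<longrightarrow> nondegenerate R d B \<longrightarrow>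
     (\<forall>i<k. A i \<subseteq> fvecs R d \<and>
        real (card (A i)) \<ge> C * real (card (carrier R)) powr ((real d - 1) / 2 + real t)) \<longrightarrow>
     (\<forall>e\<in>E. lam e \<in> carrier R - {\<zero>\<^bsub>R\<^esub>}) \<longrightarrow>
     \<bar>real (num_solutions R B k E A lam)
        - real (card (carrier R)) powi (- int (card E)) * (\<Prod>i<k. real (card (A i)))\<bar>
       \<le> \<epsilon> * real (card (carrier R)) powi (- int (card E)) * (\<Prod>i<k. real (card (A i)))"
  proof (rule exI[of _ C], rule conjI[OF Cpos], intro allI impI)
    fix R :: "nat ring" and B :: "nat list \<Rightarrow> nat list \<Rightarrow> nat" and A :: "nat \<Rightarrow> nat list set"
      and lam :: "nat \<times> nat \<Rightarrow> nat"
    assume fR: "field R" and finR: "finite (carrier R)" and bil: "bilinear_form R d B"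
      and nd: "nondegenerate R d B"
      and HA: "\<forall>i<k. A i \<subseteq> fvecs R d \<and>
        real (card (A i)) \<ge> C * real (card (carrier R)) powr ((real d - 1) / 2 + real t)"
      and Hl: "\<forall>e\<in>E. lam e \<in> carrier R - {\<zero>\<^bsub>R\<^esub>}"
    have bf: "bfq R d B" unfolding bfq_def bfq_axioms_def using fR finR bil nd by blast
    interpret B1: bfq R d B by (rule bf)
    have qpos: "real (card (carrier R)) > 0" using B1.q_ge2 by simp
    have Ane: "\<forall>i<k. card (A i) > 0"
    proof (intro allI impI)
      fix i assume "i < k"
      hence "real (card (A i)) \<ge> C * real (card (carrier R)) powr ((real d - 1) / 2 + real t)" using HA by blast
      moreover have "C * real (card (carrier R)) powr ((real d - 1) / 2 + real t) > 0" using Cpos qpos by simp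
      ultimately show "card (A i) > 0" by simp
    qed
    have "sys2 R d B k E A lam t C"
      unfolding sys2_def sys2_axioms_def sys_def sys_axioms_def
      using bf assms(5,6) HA Hl Ane Cpos by blast
    then interpret S2: sys2 R d B k E A lam t C .
    have M: "\<bar>S2.S E - S2.PA / real (card (carrier R)) ^ card E\<bar>
        \<le> ((1 + S2.dl) ^ card E - 1) * S2.PA / real (card (carrier R)) ^ card E"
      by (rule S2.main) simp
    have NS: "real (num_solutions R B k E A lam) = S2.S E" unfolding S2.S_def S2.num_sol ..
    have pow: "real (card (carrier R)) powi (- int (card E)) = 1 / real (card (carrier R)) ^ card E"
      by (simp add: power_int_minus divide_inverse)
    have dl: "S2.dl = dl0" unfolding S2.dl_def using dlC .
    have PA0: "S2.PA / real (card (carrier R)) ^ card E \<ge> 0" using S2.PA_nonneg qpos by simp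
    have "((1 + S2.dl) ^ card E - 1) * S2.PA / real (card (carrier R)) ^ card E
        = ((1 + S2.dl) ^ card E - 1) * (S2.PA / real (card (carrier R)) ^ card E)" by simp
    also have "\<dots> \<le> \<epsilon> * (S2.PA / real (card (carrier R)) ^ card E)"
      using pw PA0 unfolding dl L_def by (rule mult_right_mono)
    finally have M2: "\<bar>S2.S E - S2.PA / real (card (carrier R)) ^ card E\<bar> \<le> \<epsilon> * (S2.PA / real (card (carrier R)) ^ card E)"
      using M by linarith
    show "\<bar>real (num_solutions R B k E A lam)
        - real (card (carrier R)) powi (- int (card E)) * (\<Prod>i<k. real (card (A i)))\<bar>
       \<le> \<epsilon> * real (card (carrier R)) powi (- int (card E)) * (\<Prod>i<k. real (card (A i)))"
      using M2 unfolding NS pow S2.PA_def by simp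
  qed
qed

end
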